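(* Let $U,W$ be smooth on $\mathbb R^d$ with $\nu(dx)=e^{-W}dx$ and $\mu(dx)=e^{-(U+W)}dx$ probability measures, and assume $\nu$ satisfies a weighted Poincaré inequality with weight $\omega$ and constant $C_{P,\omega}(\nu)$. Suppose there exists $\varepsilon>0$ such that $s:=\sup_xC_{P,\omega}(\nu)\frac{1+\varepsilon}{4}|\nabla U(x)|^2\omega^2(x)<1$. Then $\mu$ satisfies a weighted Poincaré inequality with weight $\omega$ and $C_{P,\omega}(\mu)\le\frac{(1+\varepsilon^{-1})C_{P,\omega}(\nu)}{1-s}$.
   Context: A probability measure $\mu$ satisfies a weighted Poincaré inequality with weight $\omega\ge0$ and constant $C_{P,\omega}(\mu)$ if for all smooth $f$, $\mathrm{Var}_\mu(f)\le C_{P,\omega}(\mu)\int|\nabla f|^2\omega^2d\mu$. *)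

theory Defs
  imports "HOL-Analysis.Analysis" "HOL-Probability.Probability"
begin

text \<open>Smooth (C-infinity) real-valued functions on a Euclidean space: f belongs to a
  family of everywhere Frechet-differentiable functions that is closed under taking
  partial derivatives along the basis directions. (Differentiability implies
  continuity, so all iterated partial derivatives exist and are continuous.)\<close>
definition smooth :: "('a::euclidean_space \<Rightarrow> real) \<Rightarrow> bool" where
  "smooth f \<longleftrightarrow> (\<exists>F. f \<in> F \<and>
     (\<forall>g\<in>F. (\<forall>x. g differentiable (at x)) \<and>
        (\<forall>b\<in>Basis. (\<lambda>x. frechet_derivative g (at x) b) \<in> F)))"

definition grad :: "('a::euclidean_space \<Rightarrow> real) \<Rightarrow> 'a \<Rightarrow> 'a" where
  "grad f x = (\<Sum>b\<in>Basis. frechet_derivative f (at x) b *\<^sub>R b)"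

text \<open>Variance of f under M, as an extended nonnegative real (infinite if f is not
  square integrable).\<close>
definition Var :: "'a measure \<Rightarrow> ('a \<Rightarrow> real) \<Rightarrow> ennreal" where
  "Var M f = (\<integral>\<^sup>+ x. ennreal ((f x - (\<integral> y. f y \<partial>M))\<^sup>2) \<partial>M)"

definition weighted_poincare :: "'a::euclidean_space measure \<Rightarrow> ('a \<Rightarrow> real) \<Rightarrow> real \<Rightarrow> bool" where
  "weighted_poincare M w C \<longleftrightarrow>
     (\<forall>f. smooth f \<longrightarrow>
        Var M f \<le> ennreal C * (\<integral>\<^sup>+ x. ennreal ((norm (grad f x))\<^sup>2 * (w x)\<^sup>2) \<partial>M))"

end

theory Submission
  imports Defs
begin


lemma smooth_D:
  assumes "smooth f"
  shows "f differentiable (at x)" and "b \<in> Basis \<Longrightarrow> smooth (\<lambda>x. frechet_derivative f (at x) b)"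
proof -
  from assms obtain F where F: "f \<in> F" "\<forall>g\<in>F. (\<forall>x. g differentiable (at x)) \<and>
        (\<forall>b\<in>Basis. (\<lambda>x. frechet_derivative g (at x) b) \<in> F)"
    unfolding smooth_def by blast
  show "f differentiable (at x)" using F by blast
  show "b \<in> Basis \<Longrightarrow> smooth (\<lambda>x. frechet_derivative f (at x) b)"
    unfolding smooth_def using F by blast
qed

lemma smooth_coinduct:
  fixes G :: "('a::euclidean_space \<Rightarrow> real) set"
  assumes "\<And>g x. g \<in> G \<Longrightarrow> g differentiable (at x)"
    and "\<And>g b. g \<in> G \<Longrightarrow> b \<in> Basis \<Longrightarrow> (\<lambda>x. frechet_derivative g (at x) b) \<in> G \<or> smooth (\<lambda>x. frechet_derivative g (at x) b)"
    and "f \<in> G"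
  shows "smooth f"
proof -
  have "f \<in> G \<union> Collect smooth \<and> (\<forall>g\<in>G \<union> Collect smooth. (\<forall>x. g differentiable (at x)) \<and>
        (\<forall>b\<in>Basis. (\<lambda>x. frechet_derivative g (at x) b) \<in> G \<union> Collect smooth))"
  proof (intro conjI ballI allI)
    show "f \<in> G \<union> Collect smooth" using assms(3) by simp
  next
    fix g :: "'a \<Rightarrow> real" and x assume "g \<in> G \<union> Collect smooth"
    then show "g differentiable (at x)" using assms(1) smooth_D(1) by auto
  next
    fix g :: "'a \<Rightarrow> real" and b :: 'a assume "g \<in> G \<union> Collect smooth" "b \<in> Basis"
    then show "(\<lambda>x. frechet_derivative g (at x) b) \<in> G \<union> Collect smooth"
      using assms(2) smooth_D(2) by auto
  qed
  then show ?thesis unfolding smooth_def by (rule exI)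
qed

lemma fd_eq: "(f has_derivative D) (at x) \<Longrightarrow> frechet_derivative f (at x) b = D b"
  using frechet_derivative_at by metis

lemma fd_has: "f differentiable (at x) \<Longrightarrow> (f has_derivative frechet_derivative f (at x)) (at x)"
  using frechet_derivative_works by blast

lemma smooth_has: "smooth f \<Longrightarrow> (f has_derivative frechet_derivative f (at x)) (at x)"
  using fd_has smooth_D(1) by blast

lemma smooth_const: "smooth (\<lambda>x. c)"
proof (rule smooth_coinduct[where G="range (\<lambda>c x. c)"])
  fix g :: "'a \<Rightarrow> real" and b :: 'a and x assume "g \<in> range (\<lambda>c x. c)"
  then obtain c where g: "g = (\<lambda>x. c)" by blast
  show "g differentiable (at x)" unfolding g by simp
  have "frechet_derivative g (at x) b = 0" for x
    unfolding g by (rule fd_eq) (rule has_derivative_const)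
  then show "(\<lambda>x. frechet_derivative g (at x) b) \<in> range (\<lambda>c x. c) \<or> smooth (\<lambda>x. frechet_derivative g (at x) b)"
    by auto
qed auto

lemma smooth_add: assumes "smooth f" "smooth g" shows "smooth (\<lambda>x. f x + g x)"
proof (rule smooth_coinduct[where G="{(\<lambda>x. f x + g x) | f g. smooth f \<and> smooth g}"])
  fix h :: "'a \<Rightarrow> real" and b :: 'a and x assume "h \<in> {(\<lambda>x. f x + g x) | f g. smooth f \<and> smooth g}"
  then obtain f g where h: "h = (\<lambda>x. f x + g x)" and fg: "smooth f" "smooth g" by blast
  show "h differentiable (at x)" unfolding h by (intro differentiable_add) (use fg smooth_D in auto)
  assume b: "b \<in> Basis"
  have "frechet_derivative h (at x) b = frechet_derivative f (at x) b + frechet_derivative g (at x) b" for x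
    unfolding h by (rule fd_eq, rule has_derivative_add) (use fg smooth_has in auto)
  then show "(\<lambda>x. frechet_derivative h (at x) b) \<in> {(\<lambda>x. f x + g x) | f g. smooth f \<and> smooth g} \<or> smooth (\<lambda>x. frechet_derivative h (at x) b)"
    by (intro disjI1 CollectI exI[of _ "\<lambda>x. frechet_derivative f (at x) b"] exI[of _ "\<lambda>x. frechet_derivative g (at x) b"])
      (use fg smooth_D(2)[OF _ b] in auto)
qed (intro CollectI exI[of _ f] exI[of _ g], use assms in auto)

inductive_set sprod :: "('a::euclidean_space \<Rightarrow> real) set" where
  base: "smooth f \<Longrightarrow> smooth g \<Longrightarrow> (\<lambda>x. f x * g x) \<in> sprod"
| plus: "p \<in> sprod \<Longrightarrow> q \<in> sprod \<Longrightarrow> (\<lambda>x. p x + q x) \<in> sprod"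

lemma sprod_diff: "p \<in> sprod \<Longrightarrow> p differentiable (at x)"
  by (induction p rule: sprod.induct) (auto intro!: differentiable_add differentiable_mult simp: smooth_D)

lemma sprod_deriv: "p \<in> sprod \<Longrightarrow> b \<in> Basis \<Longrightarrow> (\<lambda>x. frechet_derivative p (at x) b) \<in> sprod"
proof (induction p rule: sprod.induct)
  case (base f g)
  have "frechet_derivative (\<lambda>x. f x * g x) (at x) b = f x * frechet_derivative g (at x) b + frechet_derivative f (at x) b * g x" for x
    by (rule fd_eq, rule has_derivative_mult) (use base smooth_has in auto)
  then have e: "(\<lambda>x. frechet_derivative (\<lambda>x. f x * g x) (at x) b) = (\<lambda>x. f x * frechet_derivative g (at x) b + frechet_derivative f (at x) b * g x)"
    by auto
  show ?case unfolding e by (intro sprod.intros) (use base smooth_D in auto)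
next
  case (plus p q)
  have "frechet_derivative (\<lambda>x. p x + q x) (at x) b = frechet_derivative p (at x) b + frechet_derivative q (at x) b" for x
    by (rule fd_eq, rule has_derivative_add) (use plus sprod_diff fd_has in auto)
  then have e: "(\<lambda>x. frechet_derivative (\<lambda>x. p x + q x) (at x) b) = (\<lambda>x. frechet_derivative p (at x) b + frechet_derivative q (at x) b)"
    by auto
  show ?case unfolding e by (intro sprod.intros) (use plus in auto)
qed

lemma smooth_mult: assumes "smooth f" "smooth g" shows "smooth (\<lambda>x. f x * g x)"
  by (rule smooth_coinduct[where G=sprod]) (use sprod_diff sprod_deriv sprod.base assms in auto)

lemma smooth_exp: assumes "smooth f" shows "smooth (\<lambda>x. exp (f x))"
proof -
  let ?G = "{(\<lambda>x. exp (f x) * g x) | f g. smooth f \<and> smooth g}"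
  have mem: "(\<lambda>x. exp (f x) * 1) \<in> ?G" by (intro CollectI exI[of _ f] exI[of _ "\<lambda>_. 1"]) (use assms smooth_const in auto)
  have "smooth (\<lambda>x. exp (f x) * 1)"
  proof (rule smooth_coinduct[where G="?G"])
    fix h :: "'a \<Rightarrow> real" and b :: 'a and x assume "h \<in> ?G"
    then obtain f g where h: "h = (\<lambda>x. exp (f x) * g x)" and fg: "smooth f" "smooth g" by blast
    show "h differentiable (at x)" unfolding h
      by (rule differentiableI, rule has_derivative_mult, rule has_derivative_exp) (use fg smooth_has in auto)
    assume b: "b \<in> Basis"
    have "frechet_derivative h (at x) b = exp (f x) * frechet_derivative g (at x) b + (exp (f x) * frechet_derivative f (at x) b) * g x" for x
    proof -
      have "((\<lambda>x. exp (f x) * g x) has_derivative (\<lambda>v. exp (f x) * frechet_derivative g (at x) v + (frechet_derivative f (at x) v * exp (f x)) * g x)) (at x)"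
        by (rule has_derivative_mult[OF has_derivative_exp[OF smooth_has[OF fg(1)]] smooth_has[OF fg(2)]])
      then show ?thesis unfolding h by (subst fd_eq) (auto simp: algebra_simps)
    qed
    then have "(\<lambda>x. frechet_derivative h (at x) b) = (\<lambda>x. exp (f x) * (frechet_derivative g (at x) b + frechet_derivative f (at x) b * g x))"
      by (auto simp: algebra_simps)
    moreover have "smooth (\<lambda>x. frechet_derivative g (at x) b + frechet_derivative f (at x) b * g x)"
      by (intro smooth_add smooth_mult) (use fg smooth_D b in auto)
    ultimately show "(\<lambda>x. frechet_derivative h (at x) b) \<in> ?G \<or> smooth (\<lambda>x. frechet_derivative h (at x) b)"
      by (intro disjI1 CollectI exI[of _ f] exI[of _ "\<lambda>x. frechet_derivative g (at x) b + frechet_derivative f (at x) b * g x"])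
        (use fg in auto)
  qed (rule mem)
  then show ?thesis by simp
qed

lemma smooth_cmult: "smooth f \<Longrightarrow> smooth (\<lambda>x. c * f x)"
  using smooth_mult[OF smooth_const] by blast

lemma smooth_minus: "smooth f \<Longrightarrow> smooth g \<Longrightarrow> smooth (\<lambda>x. f x - g x)"
  using smooth_add[of f "\<lambda>x. (-1) * g x"] smooth_cmult[of g "-1"] by simp


lemma grad_unique:
  assumes "(f has_derivative (\<lambda>v. G \<bullet> v)) (at x)"
  shows "grad f x = G"
proof -
  have "grad f x = (\<Sum>b\<in>Basis. (G \<bullet> b) *\<^sub>R b)"
    unfolding grad_def using fd_eq[OF assms] by simp
  also have "\<dots> = G" by (rule euclidean_representation)
  finally show ?thesis .
qed

lemma grad_has:
  assumes "f differentiable (at x)"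
  shows "(f has_derivative (\<lambda>v. grad f x \<bullet> v)) (at x)"
proof -
  let ?D = "frechet_derivative f (at x)"
  have d: "(f has_derivative ?D) (at x)" using fd_has[OF assms] .
  then have lin: "linear ?D" using has_derivative_linear by blast
  have "?D v = grad f x \<bullet> v" for v
  proof -
    have "?D v = ?D (\<Sum>b\<in>Basis. (v \<bullet> b) *\<^sub>R b)" by (simp add: euclidean_representation)
    also have "\<dots> = (\<Sum>b\<in>Basis. (v \<bullet> b) * ?D b)"
      using lin by (simp add: linear_sum linear_scale)
    also have "\<dots> = grad f x \<bullet> v"
      unfolding grad_def by (simp add: inner_sum_left inner_sum_right inner_commute[of _ v] mult.commute)
    finally show ?thesis .
  qed
  then have "?D = (\<lambda>v. grad f x \<bullet> v)" by auto
  with d show ?thesis by simp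
qed

lemma smooth_grad_has: "smooth f \<Longrightarrow> (f has_derivative (\<lambda>v. grad f x \<bullet> v)) (at x)"
  using grad_has smooth_D(1) by blast

lemma smooth_cont: "smooth f \<Longrightarrow> continuous_on UNIV f"
  by (meson continuous_at_imp_continuous_on differentiable_imp_continuous_within smooth_D(1))

lemma smooth_meas: "smooth f \<Longrightarrow> f \<in> borel_measurable borel"
  by (rule borel_measurable_continuous_onI, rule smooth_cont)

lemma grad_cont: "smooth f \<Longrightarrow> continuous_on UNIV (grad f)"
proof -
  assume f: "smooth f"
  have "continuous_on UNIV (\<lambda>x. \<Sum>b\<in>Basis. frechet_derivative f (at x) b *\<^sub>R b)"
    by (intro continuous_intros continuous_on_scaleR smooth_cont smooth_D(2)[OF f]) auto
  then show ?thesis unfolding grad_def[abs_def] .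
qed

lemma grad_meas: "smooth f \<Longrightarrow> grad f \<in> borel_measurable borel"
  by (rule borel_measurable_continuous_onI, rule grad_cont)



lemma grad_h:
  assumes "smooth g" "smooth U"
  shows "grad (\<lambda>x. (g x - c) * exp (- U x / 2)) x =
    exp (- U x / 2) *\<^sub>R grad g x - ((g x - c) * exp (- U x / 2) / 2) *\<^sub>R grad U x"
proof (rule grad_unique)
  have "((\<lambda>x. (g x - c) * exp (- U x / 2)) has_derivative
     (\<lambda>v. (g x - c) * ((- (grad U x \<bullet> v) / 2) * exp (- U x / 2)) + (grad g x \<bullet> v) * exp (- U x / 2))) (at x)"
    by (auto intro!: derivative_eq_intros smooth_grad_has[OF assms(1)] smooth_grad_has[OF assms(2)] simp: field_simps fun_eq_iff)
  then show "((\<lambda>x. (g x - c) * exp (- U x / 2)) has_derivative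
     (\<lambda>v. (exp (- U x / 2) *\<^sub>R grad g x - ((g x - c) * exp (- U x / 2) / 2) *\<^sub>R grad U x) \<bullet> v)) (at x)"
    by (rule has_derivative_eq_rhs) (auto simp: algebra_simps inner_diff_left fun_eq_iff)
qed

lemma smooth_h: "smooth g \<Longrightarrow> smooth U \<Longrightarrow> smooth (\<lambda>x. (g x - c) * exp (- U x / 2))"
  by (intro smooth_mult smooth_minus smooth_const smooth_exp) (auto dest: smooth_cmult[of _ "-1/2"] simp: field_simps)

lemma young_real:
  fixes x y e :: real assumes "e > 0"
  shows "(x + y)^2 \<le> (1 + 1/e) * x^2 + (1 + e) * y^2"
proof -
  have "e * (x + y)^2 \<le> e * ((1 + 1/e) * x^2 + (1 + e) * y^2)"
  proof -
    have "e * ((1 + 1/e) * x^2 + (1 + e) * y^2) - e * (x + y)^2 = (x - e * y)^2"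
      using assms by (simp add: field_simps power2_eq_square)
    then show ?thesis by (smt (verit) zero_le_power2)
  qed
  then show ?thesis using assms by simp
qed

lemma young_norm:
  fixes a b :: "'a::real_normed_vector" and e :: real assumes "e > 0"
  shows "(norm (a - b))^2 \<le> (1 + 1/e) * (norm a)^2 + (1 + e) * (norm b)^2"
proof -
  have "(norm (a - b))^2 \<le> (norm a + norm b)^2"
    by (rule power_mono[OF norm_triangle_ineq4 norm_ge_zero])
  also have "\<dots> \<le> (1 + 1/e) * (norm a)^2 + (1 + e) * (norm b)^2" by (rule young_real[OF assms])
  finally show ?thesis .
qed

lemma grad_trunc:
  assumes "smooth f" "N \<noteq> 0"
  shows "grad (\<lambda>x. f x * exp (- ((f x)^2) / N)) x =
    ((1 - 2 * (f x)^2 / N) * exp (- ((f x)^2) / N)) *\<^sub>R grad f x"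
proof (rule grad_unique)
  have "((\<lambda>x. f x * exp (- ((f x)^2) / N)) has_derivative
     (\<lambda>v. f x * ((- (2 * f x * (grad f x \<bullet> v)) / N) * exp (- ((f x)^2) / N)) + (grad f x \<bullet> v) * exp (- ((f x)^2) / N))) (at x)"
    by (auto intro!: derivative_eq_intros smooth_grad_has[OF assms(1)] simp: assms(2) algebra_simps fun_eq_iff)
  then show "((\<lambda>x. f x * exp (- ((f x)^2) / N)) has_derivative
     (\<lambda>v. (((1 - 2 * (f x)^2 / N) * exp (- ((f x)^2) / N)) *\<^sub>R grad f x) \<bullet> v)) (at x)"
    by (rule has_derivative_eq_rhs) (use assms(2) in \<open>auto simp: algebra_simps fun_eq_iff power2_eq_square diff_divide_distrib\<close>)
qed

lemma smooth_trunc: "smooth f \<Longrightarrow> smooth (\<lambda>x. f x * exp (- ((f x)^2) / N))"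
  by (intro smooth_mult smooth_exp) (auto intro: smooth_cmult[of "\<lambda>x. f x * f x" "-1/N", simplified] smooth_mult simp: power2_eq_square)

lemma trunc_deriv_bound:
  fixes u :: real assumes "u \<ge> 0"
  shows "\<bar>(1 - 2 * u) * exp (- u)\<bar> \<le> 1"
proof -
  have e1: "1 + u \<le> exp u" by (rule exp_ge_add_one_self)
  have "exp u = exp (u/2)^2" by (simp add: exp_double[symmetric])
  moreover have "1 + u/2 \<le> exp (u/2)" by (rule exp_ge_add_one_self)
  ultimately have "(1 + u/2)^2 \<le> exp u" using assms by (metis power_mono add_nonneg_nonneg zero_le_one divide_nonneg_pos zero_less_numeral)
  moreover have "(1 + u/2)^2 = 2*u - 1 + ((u/2 - 1)^2 + 1)" by (simp add: power2_eq_square algebra_simps)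
  ultimately have "2 * u - 1 \<le> exp u" using zero_le_power2[of "u/2 - 1"] by linarith
  then have "\<bar>1 - 2 * u\<bar> \<le> exp u" using e1 assms by linarith
  then have "\<bar>1 - 2 * u\<bar> * exp (- u) \<le> exp u * exp (-u)" by (intro mult_right_mono) auto
  then show ?thesis by (simp add: abs_mult exp_minus field_simps)
qed

lemma trunc_bound:
  fixes t N :: real assumes "N \<ge> 1"
  shows "\<bar>t * exp (- (t^2) / N)\<bar> \<le> N"
proof -
  have "\<bar>t\<bar> \<le> N * exp (t^2 / N)"
  proof (cases "\<bar>t\<bar> \<le> N")
    case True
    moreover have "N \<le> N * exp (t^2 / N)" using assms by simp
    ultimately show ?thesis by linarith
  next
    case False
    have "1 + t^2/N \<le> exp (t^2/N)" by (rule exp_ge_add_one_self)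
    moreover have "\<bar>t\<bar> \<le> N * (1 + t^2/N)"
    proof -
      have "N * (1 + t^2/N) = N + t^2" using assms by (simp add: field_simps)
      moreover have "\<bar>t\<bar> \<le> t^2" using False assms
        by (metis abs_ge_self abs_le_square_iff abs_of_nonneg dual_order.trans le_cases mult_left_mono not_one_le_zero power2_eq_square power2_abs abs_ge_zero mult_right_mono mult_1 linorder_not_le)
      ultimately show ?thesis using assms by linarith
    qed
    ultimately show ?thesis using assms by (smt (verit) mult_left_mono)
  qed
  then have "\<bar>t\<bar> * exp (- (t^2) / N) \<le> N * exp (t^2 / N) * exp (- (t^2) / N)" by (intro mult_right_mono) auto
  then show ?thesis by (simp add: abs_mult exp_minus field_simps)
qed



lemma ennreal_absorb:
  fixes X A :: ennreal and a s :: real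
  assumes "X < \<infinity>" "X \<le> ennreal a * A + ennreal s * X" "0 \<le> s" "s < 1" "0 \<le> a"
  shows "X \<le> ennreal (a / (1 - s)) * A"
proof -
  obtain x where x: "X = ennreal x" "0 \<le> x" using assms(1) by (cases X) auto
  show ?thesis
  proof (cases "A = \<infinity>")
    case True
    show ?thesis
    proof (cases "a = 0")
      case True
      then have "ennreal x \<le> ennreal (s * x)" using assms(2) x by (simp add: ennreal_mult'')
      then have "x \<le> s * x \<or> x = 0" using x assms by (auto simp: ennreal_le_iff2)
      then have "x = 0" using x assms by (smt (verit) mult_le_cancel_right1)
      then show ?thesis using x by simp
    next
      case False
      then have "a / (1 - s) > 0" using assms by simp
      then have "ennreal (a / (1 - s)) * A = \<infinity>" using \<open>A = \<infinity>\<close> \<open>a \<noteq> 0\<close> assms(4) by (simp add: ennreal_mult_top)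
      then show ?thesis by simp
    qed
  next
    case False
    then obtain y where y: "A = ennreal y" "0 \<le> y" by (cases A) auto
    have "ennreal x \<le> ennreal (a * y + s * x)"
      using assms(2) x y assms by (simp add: ennreal_mult'' ennreal_plus[symmetric])
    then have "x \<le> a * y + s * x" using x y assms
      by (subst (asm) ennreal_le_iff) (auto intro!: add_nonneg_nonneg mult_nonneg_nonneg)
    then have "x * (1 - s) \<le> a * y" by (simp add: algebra_simps)
    then have "x \<le> a * y / (1 - s)" using assms by (simp add: field_simps)
    then have "x \<le> a / (1 - s) * y" by simp
    then show ?thesis using x y assms by (simp add: ennreal_mult''[symmetric] ennreal_leI)
  qed
qed

lemma pointwise_bound:
  assumes g: "smooth g" and U: "smooth U" and e: "\<epsilon> > 0" and C: "C \<ge> 0"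
    and sx: "C * (1 + \<epsilon>) / 4 * (norm (grad U x))\<^sup>2 * (w x)\<^sup>2 \<le> s"
  shows "C * ((norm (grad (\<lambda>x. (g x - c) * exp (- U x / 2)) x))\<^sup>2 * (w x)\<^sup>2)
    \<le> (1 + 1/\<epsilon>) * C * (exp (- U x) * ((norm (grad g x))\<^sup>2 * (w x)\<^sup>2)) + s * (exp (- U x) * (g x - c)\<^sup>2)"
proof -
  define E where "E = exp (- U x / 2)"
  have E2: "E\<^sup>2 = exp (- U x)" unfolding E_def by (simp add: exp_double[symmetric] power2_eq_square exp_add[symmetric])
  have E0: "E > 0" unfolding E_def by simp
  let ?A = "E *\<^sub>R grad g x" and ?B = "((g x - c) * E / 2) *\<^sub>R grad U x"
  have gh: "grad (\<lambda>x. (g x - c) * exp (- U x / 2)) x = ?A - ?B"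
    unfolding E_def by (rule grad_h[OF g U])
  have y: "(norm (?A - ?B))\<^sup>2 \<le> (1 + 1/\<epsilon>) * (norm ?A)\<^sup>2 + (1 + \<epsilon>) * (norm ?B)\<^sup>2"
    by (rule young_norm[OF e])
  have nA: "(norm ?A)\<^sup>2 = E\<^sup>2 * (norm (grad g x))\<^sup>2" using E0 by (simp add: power_mult_distrib)
  have nB: "(norm ?B)\<^sup>2 = (g x - c)\<^sup>2 * E\<^sup>2 / 4 * (norm (grad U x))\<^sup>2"
    by (simp add: power_mult_distrib power_divide power2_abs)
  have cw: "C * (w x)\<^sup>2 \<ge> 0" using C by simp
  have "C * ((norm (?A - ?B))\<^sup>2 * (w x)\<^sup>2) = (C * (w x)\<^sup>2) * (norm (?A - ?B))\<^sup>2" by simp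
  also have "\<dots> \<le> (C * (w x)\<^sup>2) * ((1 + 1/\<epsilon>) * (norm ?A)\<^sup>2 + (1 + \<epsilon>) * (norm ?B)\<^sup>2)"
    by (rule mult_left_mono[OF y cw])
  also have "\<dots> = (1 + 1/\<epsilon>) * C * (E\<^sup>2 * ((norm (grad g x))\<^sup>2 * (w x)\<^sup>2))
      + (E\<^sup>2 * (g x - c)\<^sup>2) * (C * (1 + \<epsilon>) / 4 * (norm (grad U x))\<^sup>2 * (w x)\<^sup>2)"
    unfolding nA nB by (simp add: algebra_simps)
  also have "\<dots> \<le> (1 + 1/\<epsilon>) * C * (E\<^sup>2 * ((norm (grad g x))\<^sup>2 * (w x)\<^sup>2)) + (E\<^sup>2 * (g x - c)\<^sup>2) * s"
    by (intro add_left_mono mult_left_mono sx) simp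
  finally show ?thesis unfolding gh E2 by (simp add: mult.commute)
qed

lemma core:
  fixes \<nu> :: "'a::euclidean_space measure" and U g w :: "'a \<Rightarrow> real"
  assumes nus: "sets \<nu> = sets borel" and nup: "prob_space \<nu>"
    and mup: "prob_space (density \<nu> (\<lambda>x. ennreal (exp (- U x))))"
    and U: "smooth U" and g: "smooth g" and gM: "\<And>x. \<bar>g x\<bar> \<le> M"
    and w0: "\<forall>x. w x \<ge> 0" and wm: "w \<in> borel_measurable borel"
    and C: "C \<ge> 0" and P: "weighted_poincare \<nu> w C"
    and e: "\<epsilon> > 0" and sx: "\<And>x. C * (1 + \<epsilon>) / 4 * (norm (grad U x))\<^sup>2 * (w x)\<^sup>2 \<le> s"
    and s0: "0 \<le> s" and s1: "s < 1"
  shows "\<exists>c. (\<integral>\<^sup>+ x. ennreal ((g x - c)\<^sup>2) \<partial>density \<nu> (\<lambda>x. ennreal (exp (- U x))))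
     \<le> ennreal ((1 + 1/\<epsilon>) * C / (1 - s)) * (\<integral>\<^sup>+ x. ennreal ((norm (grad g x))\<^sup>2 * (w x)\<^sup>2) \<partial>density \<nu> (\<lambda>x. ennreal (exp (- U x))))"
proof -
  let ?\<mu> = "density \<nu> (\<lambda>x. ennreal (exp (- U x)))"
  have meq: "measurable \<nu> N = measurable borel N" for N :: "'b measure"
    by (rule measurable_cong_sets[OF nus refl])
  have sp: "space \<nu> = UNIV" using sets_eq_imp_space_eq[OF nus] by simp
  note [measurable] = smooth_meas[OF U] smooth_meas[OF g] grad_meas[OF U] grad_meas[OF g] wm
  define E where "E x = exp (- U x / 2)" for x
  have E2: "(E x)\<^sup>2 = exp (- U x)" for x unfolding E_def by (simp add: power2_eq_square exp_add[symmetric])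
  have E0: "E x > 0" for x unfolding E_def by simp
  have Em[measurable]: "E \<in> borel_measurable borel" unfolding E_def[abs_def] by measurable
  have dens: "integral\<^sup>N ?\<mu> F = (\<integral>\<^sup>+ x. ennreal (exp (- U x)) * F x \<partial>\<nu>)" if "F \<in> borel_measurable borel" for F
    by (rule nn_integral_density) (use that in \<open>auto simp: meq\<close>)
  have intE2: "(\<integral>\<^sup>+ x. ennreal ((E x)\<^sup>2) \<partial>\<nu>) = 1"
  proof -
    have "(\<integral>\<^sup>+ x. ennreal ((E x)\<^sup>2) \<partial>\<nu>) = (\<integral>\<^sup>+ x. ennreal (exp (- U x)) * 1 \<partial>\<nu>)" by (simp add: E2)
    also have "\<dots> = integral\<^sup>N ?\<mu> (\<lambda>_. 1)" by (rule dens[symmetric]) simp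
    also have "\<dots> = 1" using prob_space.emeasure_space_1[OF mup] by simp
    finally show ?thesis .
  qed
  have intE: "integrable \<nu> E"
  proof (subst integrable_iff_bounded, intro conjI)
    show "E \<in> borel_measurable \<nu>" by (simp add: meq)
    have "(\<integral>\<^sup>+ x. ennreal (norm (E x)) \<partial>\<nu>) \<le> (\<integral>\<^sup>+ x. ennreal 1 + ennreal ((E x)\<^sup>2) \<partial>\<nu>)"
    proof (rule nn_integral_mono)
      fix x
      have sq: "(E x - 1/2)\<^sup>2 = (E x)\<^sup>2 - E x + 1/4" by (simp add: power2_eq_square algebra_simps)
      have "norm (E x) \<le> 1 + (E x)\<^sup>2" using E0[of x] zero_le_power2[of "E x - 1/2"] unfolding sq by simp
      then have "ennreal (norm (E x)) \<le> ennreal (1 + (E x)\<^sup>2)" by (rule ennreal_leI)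
      also have "\<dots> = ennreal 1 + ennreal ((E x)\<^sup>2)" by (rule ennreal_plus) auto
      finally show "ennreal (norm (E x)) \<le> ennreal 1 + ennreal ((E x)\<^sup>2)" .
    qed
    also have "\<dots> = (\<integral>\<^sup>+ x. ennreal 1 \<partial>\<nu>) + (\<integral>\<^sup>+ x. ennreal ((E x)\<^sup>2) \<partial>\<nu>)"
      by (rule nn_integral_add) (auto simp: meq)
    also have "\<dots> = 2" using intE2 prob_space.emeasure_space_1[OF nup] by simp
    finally show "(\<integral>\<^sup>+ x. ennreal (norm (E x)) \<partial>\<nu>) < \<infinity>" by (simp add: order_le_less_trans)
  qed
  have intgE: "integrable \<nu> (\<lambda>x. g x * E x)"
  proof (rule Bochner_Integration.integrable_bound[of _ "\<lambda>x. M * E x"])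
    show "integrable \<nu> (\<lambda>x. M * E x)" using intE by simp
    show "(\<lambda>x. g x * E x) \<in> borel_measurable \<nu>" by (simp add: meq)
    have "\<bar>g x\<bar> * E x \<le> \<bar>M\<bar> * E x" for x using gM[of x] E0[of x] by (intro mult_right_mono) auto
    then have "norm (g x * E x) \<le> norm (M * E x)" for x
      using E0[of x] by (simp add: abs_mult)
    then show "AE x in \<nu>. norm (g x * E x) \<le> norm (M * E x)" by simp
  qed
  define I where "I = integral\<^sup>L \<nu> E"
  have I0: "I > 0"
  proof -
    have "I \<ge> 0" unfolding I_def using E0 by (intro integral_nonneg_AE) (auto simp: less_imp_le)
    moreover have "I \<noteq> 0"
    proof
      assume "I = 0"
      then have "AE x in \<nu>. E x = 0" unfolding I_def
        using integral_nonneg_eq_0_iff_AE[OF intE] E0 by (auto simp: less_imp_le)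
      then have "AE x in \<nu>. False" by (rule eventually_mono) (metis E0 less_irrefl)
      then show False using prob_space.AE_False[OF nup] by simp
    qed
    ultimately show ?thesis by simp
  qed
  define c where "c = integral\<^sup>L \<nu> (\<lambda>x. g x * E x) / I"
  define h where "h x = (g x - c) * E x" for x
  have hsm: "smooth h" unfolding h_def[abs_def] E_def by (rule smooth_h[OF g U])
  note [measurable] = smooth_meas[OF hsm] grad_meas[OF hsm]
  have inth: "integral\<^sup>L \<nu> h = 0"
  proof -
    have "integral\<^sup>L \<nu> h = integral\<^sup>L \<nu> (\<lambda>x. g x * E x - c * E x)"
      unfolding h_def by (simp add: algebra_simps)
    also have "\<dots> = integral\<^sup>L \<nu> (\<lambda>x. g x * E x) - c * I"
      unfolding I_def using intgE intE by simp
    also have "\<dots> = 0" unfolding c_def using I0 by simp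
    finally show ?thesis .
  qed
  define X where "X = (\<integral>\<^sup>+ x. ennreal ((g x - c)\<^sup>2) \<partial>?\<mu>)"
  define A where "A = (\<integral>\<^sup>+ x. ennreal ((norm (grad g x))\<^sup>2 * (w x)\<^sup>2) \<partial>?\<mu>)"
  define a where "a = (1 + 1/\<epsilon>) * C"
  have a0: "a \<ge> 0" unfolding a_def using e C by simp
  have XV: "X = Var \<nu> h"
  proof -
    have "X = (\<integral>\<^sup>+ x. ennreal (exp (- U x)) * ennreal ((g x - c)\<^sup>2) \<partial>\<nu>)"
      unfolding X_def by (rule dens) simp
    also have "\<dots> = (\<integral>\<^sup>+ x. ennreal ((h x - integral\<^sup>L \<nu> h)\<^sup>2) \<partial>\<nu>)"
      unfolding inth h_def by (intro nn_integral_cong) (simp add: ennreal_mult''[symmetric] E2[symmetric] power_mult_distrib mult.commute)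
    finally show ?thesis unfolding Var_def .
  qed
  have Xfin: "X < \<infinity>"
  proof -
    have "X \<le> (\<integral>\<^sup>+ x. ennreal ((M + \<bar>c\<bar>)\<^sup>2) \<partial>?\<mu>)"
      unfolding X_def
    proof (rule nn_integral_mono)
      fix x
      have "\<bar>g x - c\<bar> \<le> M + \<bar>c\<bar>" using gM[of x] by linarith
      then have "\<bar>g x - c\<bar>\<^sup>2 \<le> (M + \<bar>c\<bar>)\<^sup>2" by (rule power_mono) simp
      then have "(g x - c)\<^sup>2 \<le> (M + \<bar>c\<bar>)\<^sup>2" by simp
      then show "ennreal ((g x - c)\<^sup>2) \<le> ennreal ((M + \<bar>c\<bar>)\<^sup>2)" by (rule ennreal_leI)
    qed
    also have "\<dots> = ennreal ((M + \<bar>c\<bar>)\<^sup>2)" using prob_space.emeasure_space_1[OF mup] by simp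
    finally show ?thesis using ennreal_less_top[of "(M + \<bar>c\<bar>)\<^sup>2"] by (auto intro: order_le_less_trans)
  qed
  have "X \<le> ennreal C * (\<integral>\<^sup>+ x. ennreal ((norm (grad h x))\<^sup>2 * (w x)\<^sup>2) \<partial>\<nu>)"
    unfolding XV by (rule mp[OF spec[OF P[unfolded weighted_poincare_def], of h] hsm])
  also have "\<dots> = (\<integral>\<^sup>+ x. ennreal (C * ((norm (grad h x))\<^sup>2 * (w x)\<^sup>2)) \<partial>\<nu>)"
  proof -
    have "ennreal C * (\<integral>\<^sup>+ x. ennreal ((norm (grad h x))\<^sup>2 * (w x)\<^sup>2) \<partial>\<nu>)
       = (\<integral>\<^sup>+ x. ennreal C * ennreal ((norm (grad h x))\<^sup>2 * (w x)\<^sup>2) \<partial>\<nu>)"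
      by (rule nn_integral_cmult[symmetric]) (simp add: meq)
    also have "\<dots> = (\<integral>\<^sup>+ x. ennreal (C * ((norm (grad h x))\<^sup>2 * (w x)\<^sup>2)) \<partial>\<nu>)"
      using C by (intro nn_integral_cong) (simp add: ennreal_mult)
    finally show ?thesis .
  qed
  also have "\<dots> \<le> (\<integral>\<^sup>+ x. ennreal (a * (exp (- U x) * ((norm (grad g x))\<^sup>2 * (w x)\<^sup>2)))
       + ennreal (s * (exp (- U x) * (g x - c)\<^sup>2)) \<partial>\<nu>)"
  proof (rule nn_integral_mono)
    fix x
    have "C * ((norm (grad h x))\<^sup>2 * (w x)\<^sup>2) \<le> a * (exp (- U x) * ((norm (grad g x))\<^sup>2 * (w x)\<^sup>2)) + s * (exp (- U x) * (g x - c)\<^sup>2)"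
      unfolding h_def[abs_def] E_def a_def by (rule pointwise_bound[OF g U e C sx])
    then show "ennreal (C * ((norm (grad h x))\<^sup>2 * (w x)\<^sup>2)) \<le> ennreal (a * (exp (- U x) * ((norm (grad g x))\<^sup>2 * (w x)\<^sup>2)))
       + ennreal (s * (exp (- U x) * (g x - c)\<^sup>2))"
    proof -
      have "ennreal (C * ((norm (grad h x))\<^sup>2 * (w x)\<^sup>2)) \<le> ennreal (a * (exp (- U x) * ((norm (grad g x))\<^sup>2 * (w x)\<^sup>2)) + s * (exp (- U x) * (g x - c)\<^sup>2))"
        by (rule ennreal_leI) fact
      also have "\<dots> = ennreal (a * (exp (- U x) * ((norm (grad g x))\<^sup>2 * (w x)\<^sup>2))) + ennreal (s * (exp (- U x) * (g x - c)\<^sup>2))"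
        by (rule ennreal_plus) (use a0 s0 in auto)
      finally show ?thesis .
    qed
  qed
  also have "\<dots> = (\<integral>\<^sup>+ x. ennreal (a * (exp (- U x) * ((norm (grad g x))\<^sup>2 * (w x)\<^sup>2))) \<partial>\<nu>)
       + (\<integral>\<^sup>+ x. ennreal (s * (exp (- U x) * (g x - c)\<^sup>2)) \<partial>\<nu>)"
    by (rule nn_integral_add) (auto simp: meq)
  also have "(\<integral>\<^sup>+ x. ennreal (a * (exp (- U x) * ((norm (grad g x))\<^sup>2 * (w x)\<^sup>2))) \<partial>\<nu>) = ennreal a * A"
  proof -
    have "(\<integral>\<^sup>+ x. ennreal (a * (exp (- U x) * ((norm (grad g x))\<^sup>2 * (w x)\<^sup>2))) \<partial>\<nu>)
        = (\<integral>\<^sup>+ x. ennreal a * (ennreal (exp (- U x)) * ennreal ((norm (grad g x))\<^sup>2 * (w x)\<^sup>2)) \<partial>\<nu>)"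
      using a0 by (simp add: ennreal_mult)
    also have "\<dots> = ennreal a * (\<integral>\<^sup>+ x. ennreal (exp (- U x)) * ennreal ((norm (grad g x))\<^sup>2 * (w x)\<^sup>2) \<partial>\<nu>)"
      by (rule nn_integral_cmult) (simp add: meq)
    also have "\<dots> = ennreal a * A" unfolding A_def by (subst dens) simp_all
    finally show ?thesis .
  qed
  also have "(\<integral>\<^sup>+ x. ennreal (s * (exp (- U x) * (g x - c)\<^sup>2)) \<partial>\<nu>) = ennreal s * X"
  proof -
    have "(\<integral>\<^sup>+ x. ennreal (s * (exp (- U x) * (g x - c)\<^sup>2)) \<partial>\<nu>)
        = (\<integral>\<^sup>+ x. ennreal s * (ennreal (exp (- U x)) * ennreal ((g x - c)\<^sup>2)) \<partial>\<nu>)"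
      using s0 by (simp add: ennreal_mult)
    also have "\<dots> = ennreal s * (\<integral>\<^sup>+ x. ennreal (exp (- U x)) * ennreal ((g x - c)\<^sup>2) \<partial>\<nu>)"
      by (rule nn_integral_cmult) (simp add: meq)
    also have "\<dots> = ennreal s * X" unfolding X_def by (subst dens) simp_all
    finally show ?thesis .
  qed
  finally have "X \<le> ennreal a * A + ennreal s * X" .
  then have "X \<le> ennreal (a / (1 - s)) * A" by (rule ennreal_absorb[OF Xfin _ s0 s1 a0])
  then show ?thesis unfolding X_def A_def a_def by blast
qed



lemma var_le:
  assumes M: "prob_space M" and fm: "f \<in> borel_measurable M"
    and fin: "(\<integral>\<^sup>+ x. ennreal ((f x - c)\<^sup>2) \<partial>M) < \<infinity>"
  shows "Var M f \<le> (\<integral>\<^sup>+ x. ennreal ((f x - c)\<^sup>2) \<partial>M)"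
proof -
  define g where "g x = f x - c" for x
  have gm[measurable]: "g \<in> borel_measurable M" unfolding g_def[abs_def] using fm by measurable
  have ig2: "integrable M (\<lambda>x. (g x)\<^sup>2)"
    using fin unfolding g_def by (subst integrable_iff_bounded) (auto simp: g_def[symmetric])
  have ig: "integrable M g"
  proof (rule Bochner_Integration.integrable_bound[of _ "\<lambda>x. 1 + (g x)\<^sup>2"])
    show "integrable M (\<lambda>x. 1 + (g x)\<^sup>2)"
      using ig2 prob_space.finite_measure[OF M] by (intro Bochner_Integration.integrable_add) (auto simp: finite_measure.integrable_const)
    have "norm (g x) \<le> norm (1 + (g x)\<^sup>2)" for x
    proof -
      have sq: "(\<bar>g x\<bar> - 1/2)\<^sup>2 = (g x)\<^sup>2 - \<bar>g x\<bar> + 1/4" by (simp add: power2_eq_square algebra_simps)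
      show ?thesis using zero_le_power2[of "\<bar>g x\<bar> - 1/2"] unfolding sq by simp
    qed
    then show "AE x in M. norm (g x) \<le> norm (1 + (g x)\<^sup>2)" by simp
  qed simp
  define m where "m = integral\<^sup>L M g"
  have fg: "f x = g x + c" for x unfolding g_def by simp
  have intf: "integral\<^sup>L M f = m + c"
  proof -
    have "integral\<^sup>L M f = integral\<^sup>L M (\<lambda>x. g x + c)" unfolding fg by simp
    also have "\<dots> = integral\<^sup>L M g + integral\<^sup>L M (\<lambda>x. c)"
      by (rule Bochner_Integration.integral_add[OF ig]) (use prob_space.finite_measure[OF M] in \<open>simp add: finite_measure.integrable_const\<close>)
    also have "integral\<^sup>L M (\<lambda>x. c) = c" using prob_space.prob_space[OF M] by simp
    finally show ?thesis unfolding m_def .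
  qed
  have "Var M f = (\<integral>\<^sup>+ x. ennreal ((g x - m)\<^sup>2) \<partial>M)"
    unfolding Var_def intf by (simp add: fg)
  also have "\<dots> = ennreal (\<integral>x. (g x - m)\<^sup>2 \<partial>M)"
  proof (rule nn_integral_eq_integral)
    have "(\<lambda>x. (g x - m)\<^sup>2) = (\<lambda>x. (g x)\<^sup>2 - 2 * m * g x + m\<^sup>2)"
      by (auto simp: power2_eq_square algebra_simps)
    then show "integrable M (\<lambda>x. (g x - m)\<^sup>2)"
      using ig ig2 prob_space.finite_measure[OF M]
      by (simp add: finite_measure.integrable_const)
  qed simp
  also have "(\<integral>x. (g x - m)\<^sup>2 \<partial>M) = (\<integral>x. (g x)\<^sup>2 \<partial>M) - m\<^sup>2"
    unfolding m_def by (rule prob_space.variance_eq[OF M ig ig2])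
  also have "ennreal \<dots> \<le> ennreal (\<integral>x. (g x)\<^sup>2 \<partial>M)" by (intro ennreal_leI) simp
  also have "\<dots> = (\<integral>\<^sup>+ x. ennreal ((g x)\<^sup>2) \<partial>M)"
    by (rule nn_integral_eq_integral[symmetric]) (use ig2 in auto)
  finally show ?thesis unfolding g_def .
qed



lemma aux_sq:
  fixes c y t :: real assumes "y\<^sup>2 \<le> t\<^sup>2"
  shows "c\<^sup>2 / (1 + t\<^sup>2) \<le> 2 * (y - c)\<^sup>2 + 2"
proof -
  have p: "0 < 1 + t\<^sup>2" by (simp add: add_pos_nonneg)
  have "c\<^sup>2 \<le> 2 * (y - c)\<^sup>2 + 2 * y\<^sup>2"
  proof -
    have "2 * (y - c)\<^sup>2 + 2 * y\<^sup>2 - c\<^sup>2 = (y - c + y)\<^sup>2 - 0 + 0"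
      by (simp add: power2_eq_square algebra_simps)
    moreover have "(y - c + y)\<^sup>2 \<ge> 0" by simp
    ultimately show ?thesis by linarith
  qed
  also have "\<dots> \<le> (2 * (y - c)\<^sup>2 + 2) * (1 + t\<^sup>2)"
  proof -
    have "(2 * (y - c)\<^sup>2 + 2) * (1 + t\<^sup>2) = 2 * (y - c)\<^sup>2 + 2 + 2 * t\<^sup>2 + 2 * (y - c)\<^sup>2 * t\<^sup>2"
      by (simp add: algebra_simps)
    moreover have "0 \<le> 2 * (y - c)\<^sup>2 * t\<^sup>2" by simp
    ultimately show ?thesis using assms by linarith
  qed
  finally show ?thesis using p by (simp add: pos_divide_le_eq)
qed

lemma trunc_conv:
  fixes t :: real
  shows "(\<lambda>n. t * exp (- (t\<^sup>2) / (real n + 1))) \<longlonglongrightarrow> t"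
proof -
  have "(\<lambda>n. (- (t\<^sup>2)) / real n) \<longlonglongrightarrow> 0" by (rule lim_const_over_n)
  then have "(\<lambda>n. (- (t\<^sup>2)) / real (Suc n)) \<longlonglongrightarrow> 0" by (rule LIMSEQ_Suc)
  then have "(\<lambda>n. (- (t\<^sup>2)) / (real n + 1)) \<longlonglongrightarrow> 0" by (simp add: add.commute)
  then have "(\<lambda>n. t * exp ((- (t\<^sup>2)) / (real n + 1))) \<longlonglongrightarrow> t * exp 0"
    by (intro tendsto_intros)
  then show ?thesis by simp
qed

theorem proposition3p2:
  fixes U W w :: "'a::euclidean_space \<Rightarrow> real" and C \<epsilon> :: real
  assumes "smooth U" and "smooth W"
    and "prob_space (density lborel (\<lambda>x. ennreal (exp (- W x))))"
    and "prob_space (density lborel (\<lambda>x. ennreal (exp (- (U x + W x)))))"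
    and "\<forall>x. w x \<ge> 0" and "w \<in> borel_measurable borel"
    and "C \<ge> 0"
    and "weighted_poincare (density lborel (\<lambda>x. ennreal (exp (- W x)))) w C"
    and "\<epsilon> > 0"
    and "bdd_above (range (\<lambda>x. C * (1 + \<epsilon>) / 4 * (norm (grad U x))\<^sup>2 * (w x)\<^sup>2))"
    and "(SUP x. C * (1 + \<epsilon>) / 4 * (norm (grad U x))\<^sup>2 * (w x)\<^sup>2) < 1"
  shows "weighted_poincare (density lborel (\<lambda>x. ennreal (exp (- (U x + W x))))) w
           ((1 + 1 / \<epsilon>) * C /
            (1 - (SUP x. C * (1 + \<epsilon>) / 4 * (norm (grad U x))\<^sup>2 * (w x)\<^sup>2)))"
proof -
  note U = assms(1) and W = assms(2)
  note [measurable] = smooth_meas[OF U] smooth_meas[OF W] grad_meas[OF U] assms(6)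
  define \<nu> where "\<nu> = density lborel (\<lambda>x. ennreal (exp (- W x)))"
  define \<mu> where "\<mu> = density \<nu> (\<lambda>x. ennreal (exp (- U x)))"
  have nus: "sets \<nu> = sets borel" unfolding \<nu>_def by simp
  have mus: "sets \<mu> = sets borel" unfolding \<mu>_def using nus by simp
  have meqm: "measurable \<mu> N = measurable borel N" for N :: "'b measure"
    by (rule measurable_cong_sets[OF mus refl])
  have mueq: "density lborel (\<lambda>x. ennreal (exp (- (U x + W x)))) = \<mu>"
  proof -
    have "\<mu> = density lborel (\<lambda>x. ennreal (exp (- W x)) * ennreal (exp (- U x)))"
      unfolding \<mu>_def \<nu>_def by (rule density_density_eq) auto
    also have "(\<lambda>x. ennreal (exp (- W x)) * ennreal (exp (- U x))) = (\<lambda>x. ennreal (exp (- (U x + W x))))"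
    proof
      fix x
      have "ennreal (exp (- W x)) * ennreal (exp (- U x)) = ennreal (exp (- W x) * exp (- U x))"
        by (rule ennreal_mult[symmetric]) auto
      also have "exp (- W x) * exp (- U x) = exp (- (U x + W x))" by (simp add: exp_add[symmetric] add.commute)
      finally show "ennreal (exp (- W x)) * ennreal (exp (- U x)) = ennreal (exp (- (U x + W x)))" .
    qed
    finally show ?thesis by simp
  qed
  have nup: "prob_space \<nu>" unfolding \<nu>_def by (rule assms(3))
  have mup: "prob_space \<mu>" using assms(4) unfolding mueq .
  have P: "weighted_poincare \<nu> w C" unfolding \<nu>_def by (rule assms(8))
  define S where "S = (SUP x. C * (1 + \<epsilon>) / 4 * (norm (grad U x))\<^sup>2 * (w x)\<^sup>2)"
  have sx: "C * (1 + \<epsilon>) / 4 * (norm (grad U x))\<^sup>2 * (w x)\<^sup>2 \<le> S" for x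
    unfolding S_def by (rule cSUP_upper[OF UNIV_I assms(10)])
  have S0: "0 \<le> S" using sx[of 0] assms(7,9) by (smt (verit) divide_nonneg_pos mult_nonneg_nonneg zero_le_power2)
  have S1: "S < 1" unfolding S_def by (rule assms(11))
  define K where "K = (1 + 1 / \<epsilon>) * C / (1 - S)"
  show ?thesis
    unfolding mueq S_def[symmetric] K_def[symmetric] weighted_poincare_def
  proof (intro allI impI)
    fix f :: "'a \<Rightarrow> real" assume f: "smooth f"
    note [measurable] = smooth_meas[OF f] grad_meas[OF f]
    define A where "A = (\<integral>\<^sup>+ x. ennreal ((norm (grad f x))\<^sup>2 * (w x)\<^sup>2) \<partial>\<mu>)"
    show "Var \<mu> f \<le> ennreal K * (\<integral>\<^sup>+ x. ennreal ((norm (grad f x))\<^sup>2 * (w x)\<^sup>2) \<partial>\<mu>)"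
    proof (cases "ennreal K * A = \<top>")
      case True then show ?thesis unfolding A_def by simp
    next
      case False
      then obtain b where b: "ennreal K * A = ennreal b" "0 \<le> b" by (cases "ennreal K * A") auto
      define fn where "fn n x = f x * exp (- ((f x)\<^sup>2) / (real n + 1))" for n x
      have fnsm: "smooth (fn n)" for n unfolding fn_def[abs_def] by (rule smooth_trunc[OF f])
      have fnm[measurable]: "fn n \<in> borel_measurable borel" for n using smooth_meas[OF fnsm] .
      have fnb: "\<bar>fn n x\<bar> \<le> real n + 1" for n x unfolding fn_def by (rule trunc_bound) simp
      have fnf: "(fn n x)\<^sup>2 \<le> (f x)\<^sup>2" for n x
      proof -
        have "\<bar>fn n x\<bar> \<le> \<bar>f x\<bar>" unfolding fn_def by (simp add: abs_mult mult_left_le)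
        then show ?thesis by (metis abs_ge_zero power2_abs power_mono)
      qed
      have gradb: "(norm (grad (fn n) x))\<^sup>2 \<le> (norm (grad f x))\<^sup>2" for n x
      proof -
        define N where "N = real n + 1"
        have N: "N \<noteq> 0" "N > 0" unfolding N_def by auto
        have g: "grad (fn n) x = ((1 - 2 * (f x)\<^sup>2 / N) * exp (- ((f x)\<^sup>2) / N)) *\<^sub>R grad f x"
          unfolding fn_def[abs_def] N_def[symmetric] by (rule grad_trunc[OF f N(1)])
        have "\<bar>(1 - 2 * ((f x)\<^sup>2 / N)) * exp (- ((f x)\<^sup>2 / N))\<bar> \<le> 1"
          by (rule trunc_deriv_bound) (use N in simp)
        then have b1: "\<bar>(1 - 2 * (f x)\<^sup>2 / N) * exp (- ((f x)\<^sup>2) / N)\<bar> \<le> 1" by simp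
        have "norm (grad (fn n) x) \<le> norm (grad f x)"
          unfolding g using b1 by (simp add: mult_left_le_one_le)
        then show ?thesis by (simp add: power_mono)
      qed
      have "\<exists>c. (\<integral>\<^sup>+ x. ennreal ((fn n x - c)\<^sup>2) \<partial>\<mu>) \<le> ennreal b" for n
      proof -
        obtain c where c: "(\<integral>\<^sup>+ x. ennreal ((fn n x - c)\<^sup>2) \<partial>\<mu>)
           \<le> ennreal K * (\<integral>\<^sup>+ x. ennreal ((norm (grad (fn n) x))\<^sup>2 * (w x)\<^sup>2) \<partial>\<mu>)"
          using core[OF nus nup mup[unfolded \<mu>_def] U fnsm fnb assms(5,6,7) P assms(9) sx S0 S1]
          unfolding K_def \<mu>_def by blast
        also have "\<dots> \<le> ennreal K * A"
          unfolding A_def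
        proof (intro mult_left_mono nn_integral_mono ennreal_leI)
          fix x show "(norm (grad (fn n) x))\<^sup>2 * (w x)\<^sup>2 \<le> (norm (grad f x))\<^sup>2 * (w x)\<^sup>2"
            by (rule mult_right_mono[OF gradb]) simp
        qed simp
        finally show ?thesis unfolding b by blast
      qed
      then obtain cn where cn: "\<And>n. (\<integral>\<^sup>+ x. ennreal ((fn n x - cn n)\<^sup>2) \<partial>\<mu>) \<le> ennreal b" by metis
      define D where "D = (\<integral>\<^sup>+ x. ennreal (1 / (1 + (f x)\<^sup>2)) \<partial>\<mu>)"
      have D1: "D \<le> 1"
      proof -
        have "D \<le> (\<integral>\<^sup>+ x. 1 \<partial>\<mu>)" unfolding D_def
          by (intro nn_integral_mono) (simp add: add_pos_nonneg)
        also have "\<dots> = 1" using prob_space.emeasure_space_1[OF mup] by simp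
        finally show ?thesis .
      qed
      have D0: "D \<noteq> 0"
      proof
        assume "D = 0"
        then have "AE x in \<mu>. ennreal (1 / (1 + (f x)\<^sup>2)) = 0"
          unfolding D_def by (subst (asm) nn_integral_0_iff_AE) (auto simp: meqm)
        then have "AE x in \<mu>. False"
        proof (rule eventually_mono)
          fix x assume z: "ennreal (1 / (1 + (f x)\<^sup>2)) = 0"
          have "0 < 1 + (f x)\<^sup>2" by (simp add: add_pos_nonneg)
          then have "0 < 1 / (1 + (f x)\<^sup>2)" by simp
          then show False using z by simp
        qed
        then show False using prob_space.AE_False[OF mup] by simp
      qed
      obtain d where d: "D = ennreal d" "0 \<le> d" using D1 by (cases D) (auto simp: top_unique)
      have dpos: "d > 0" using D0 d by (cases "d = 0") auto
      have cbound: "(cn n)\<^sup>2 * d \<le> 2 * b + 2" for n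
      proof -
        have "ennreal ((cn n)\<^sup>2) * D = (\<integral>\<^sup>+ x. ennreal ((cn n)\<^sup>2) * ennreal (1 / (1 + (f x)\<^sup>2)) \<partial>\<mu>)"
          unfolding D_def by (rule nn_integral_cmult[symmetric]) (simp add: meqm)
        also have "\<dots> \<le> (\<integral>\<^sup>+ x. ennreal 2 * ennreal ((fn n x - cn n)\<^sup>2) + ennreal 2 \<partial>\<mu>)"
        proof (rule nn_integral_mono)
          fix x
          have "ennreal ((cn n)\<^sup>2) * ennreal (1 / (1 + (f x)\<^sup>2)) = ennreal ((cn n)\<^sup>2 / (1 + (f x)\<^sup>2))"
            by (subst ennreal_mult[symmetric]) (auto simp: add_pos_nonneg)
          also have "\<dots> \<le> ennreal (2 * (fn n x - cn n)\<^sup>2 + 2)"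
            by (rule ennreal_leI, rule aux_sq[OF fnf])
          also have "\<dots> = ennreal 2 * ennreal ((fn n x - cn n)\<^sup>2) + ennreal 2"
            by (simp add: ennreal_plus ennreal_mult)
          finally show "ennreal ((cn n)\<^sup>2) * ennreal (1 / (1 + (f x)\<^sup>2)) \<le> ennreal 2 * ennreal ((fn n x - cn n)\<^sup>2) + ennreal 2" .
        qed
        also have "\<dots> = (\<integral>\<^sup>+ x. ennreal 2 * ennreal ((fn n x - cn n)\<^sup>2) \<partial>\<mu>) + (\<integral>\<^sup>+ x. ennreal 2 \<partial>\<mu>)"
          by (rule nn_integral_add) (simp_all add: meqm)
        also have "\<dots> = ennreal 2 * (\<integral>\<^sup>+ x. ennreal ((fn n x - cn n)\<^sup>2) \<partial>\<mu>) + ennreal 2"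
          using prob_space.emeasure_space_1[OF mup]
          by (subst nn_integral_cmult) (simp_all add: meqm)
        also have "\<dots> \<le> ennreal 2 * ennreal b + ennreal 2"
          by (intro add_right_mono mult_left_mono cn) simp
        also have "\<dots> = ennreal (2 * b + 2)" using b by (simp add: ennreal_plus ennreal_mult)
        finally have "ennreal ((cn n)\<^sup>2 * d) \<le> ennreal (2 * b + 2)"
          unfolding d using d by (simp add: ennreal_mult)
        then show ?thesis using b by (subst (asm) ennreal_le_iff) auto
      qed
      have "bounded (range cn)"
        unfolding bounded_iff
      proof (intro exI ballI)
        fix y assume "y \<in> range cn"
        then obtain n where y: "y = cn n" by blast
        have "(cn n)\<^sup>2 \<le> (2 * b + 2) / d" using cbound[of n] dpos by (simp add: pos_le_divide_eq)
        moreover have "\<bar>cn n\<bar> \<le> 1 + (cn n)\<^sup>2"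
        proof -
          have sq: "(\<bar>cn n\<bar> - 1/2)\<^sup>2 = (cn n)\<^sup>2 - \<bar>cn n\<bar> + 1/4" by (simp add: power2_eq_square algebra_simps)
          show ?thesis using zero_le_power2[of "\<bar>cn n\<bar> - 1/2"] unfolding sq by simp
        qed
        ultimately show "norm y \<le> 1 + (2 * b + 2) / d" unfolding y by simp
      qed
      then obtain c0 r where r: "strict_mono r" and conv: "(cn \<circ> r) \<longlonglongrightarrow> c0"
        using bounded_imp_convergent_subsequence by blast
      define u where "u k x = ennreal ((fn (r k) x - cn (r k))\<^sup>2)" for k x
      have uconv: "(\<lambda>k. u k x) \<longlonglongrightarrow> ennreal ((f x - c0)\<^sup>2)" for x
      proof -
        have "(\<lambda>n. fn n x) \<longlonglongrightarrow> f x" unfolding fn_def by (rule trunc_conv)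
        then have "((\<lambda>n. fn n x) \<circ> r) \<longlonglongrightarrow> f x" by (rule LIMSEQ_subseq_LIMSEQ[OF _ r])
        then have "(\<lambda>k. (fn (r k) x - cn (r k))\<^sup>2) \<longlonglongrightarrow> (f x - c0)\<^sup>2"
          using conv by (intro tendsto_intros) (auto simp: o_def)
        then show ?thesis unfolding u_def by (rule tendsto_ennrealI)
      qed
      have umeas: "u k \<in> borel_measurable \<mu>" for k
        unfolding u_def using smooth_meas[OF fnsm[of "r k"]] by (simp add: meqm)
      have "(\<integral>\<^sup>+ x. ennreal ((f x - c0)\<^sup>2) \<partial>\<mu>) = (\<integral>\<^sup>+ x. liminf (\<lambda>k. u k x) \<partial>\<mu>)"
        by (intro nn_integral_cong) (simp add: lim_imp_Liminf[OF trivial_limit_sequentially uconv])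
      also have "\<dots> \<le> liminf (\<lambda>k. integral\<^sup>N \<mu> (u k))" by (rule nn_integral_liminf[OF umeas])
      also have "\<dots> \<le> ennreal b"
      proof (rule Liminf_le)
        have "integral\<^sup>N \<mu> (u k) \<le> ennreal b" for k unfolding u_def by (rule cn)
        then show "\<forall>\<^sub>F k in sequentially. integral\<^sup>N \<mu> (u k) \<le> ennreal b" by simp
      qed simp
      finally have fin: "(\<integral>\<^sup>+ x. ennreal ((f x - c0)\<^sup>2) \<partial>\<mu>) \<le> ennreal b" .
      have "Var \<mu> f \<le> (\<integral>\<^sup>+ x. ennreal ((f x - c0)\<^sup>2) \<partial>\<mu>)"
        by (rule var_le[OF mup]) (use fin ennreal_less_top[of b] in \<open>auto simp: meqm intro: order_le_less_trans\<close>)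
      also note fin
      finally show ?thesis unfolding b(1)[symmetric] A_def .
    qed
  qed
qed

end
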